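(* Let $\varepsilon>0$, $\theta_0>0$, $\Delta t>0$, $N\in\mathbb{N}$, $h=L/N$, and assume the mobility is constant, $\mathcal{M}\equiv 1$. Consider the scheme: given $\phi^n\in\mathcal{C}_{\rm per}$, find $\phi^{n+1},\mu^{n+1}\in\mathcal{C}_{\rm per}$ with $$\frac{\phi^{n+1}-\phi^n}{\Delta t}=-\mu^{n+1},\qquad \mu^{n+1}=\ln(1+\phi^{n+1})-\ln(1-\phi^{n+1})-\theta_0\phi^n-\varepsilon^2\Delta_h\phi^{n+1}$$ (all operations pointwise on the grid except $\Delta_h$). Given $\phi^n\in\mathcal{C}_{\rm per}$ with $\|\phi^n\|_\infty\le M$ for some $M>0$, there exists a unique solution $\phi^{n+1}\in\mathcal{C}_{\rm per}$ of this scheme with $\|\phi^{n+1}\|_\infty<1$. Moreover, if the initial data satisfy $\|\phi^0\|_\infty\le 1-\delta_0$ for some $\delta_0\in(0,1)$, then there exists $\delta^\star\in(0,1)$, depending upon $\delta_0$ but independent of $\varepsilon$ and $n$, such that the iterates of the scheme satisfy $\|\phi^n\|_\infty\le 1-\delta^\star$ for all $n\in\mathbb{N}$.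
   Context: $\Omega=(0,L)^3$ with periodic boundary conditions. Grid points $p_i=(i-\tfrac12)h$, $h=L/N$. $\mathcal{C}_{\rm per}$ is the space of real grid functions $\nu_{i,j,k}$ on the cell centers $(p_i,p_j,p_k)$, $i,j,k\in\mathbb{Z}$, that are $N$-periodic in each index. The discrete Laplacian is $\Delta_h\nu_{i,j,k}=h^{-2}(\nu_{i+1,j,k}+\nu_{i-1,j,k}+\nu_{i,j+1,k}+\nu_{i,j-1,k}+\nu_{i,j,k+1}+\nu_{i,j,k-1}-6\nu_{i,j,k})$. $\|\nu\|_\infty=\max_{1\le i,j,k\le N}|\nu_{i,j,k}|$. The scheme is a discretization of the Allen–Cahn equation with the Flory–Huggins energy $\int_\Omega (1+\phi)\ln(1+\phi)+(1-\phi)\ln(1-\phi)-\frac{\theta_0}{2}\phi^2+\frac{\varepsilon^2}{2}|\nabla\phi|^2$. *)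

theory Defs
  imports Complex_Main
begin

type_synonym grid = "int \<Rightarrow> int \<Rightarrow> int \<Rightarrow> real"

definition per :: "nat \<Rightarrow> grid \<Rightarrow> bool" where
  "per N \<nu> \<longleftrightarrow> (\<forall>i j k. \<nu> (i + int N) j k = \<nu> i j k \<and> \<nu> i (j + int N) k = \<nu> i j k
                      \<and> \<nu> i j (k + int N) = \<nu> i j k)"

definition lap_h :: "real \<Rightarrow> grid \<Rightarrow> grid" where
  "lap_h h \<nu> i j k = (\<nu> (i+1) j k + \<nu> (i-1) j k + \<nu> i (j+1) k + \<nu> i (j-1) k
       + \<nu> i j (k+1) + \<nu> i j (k-1) - 6 * \<nu> i j k) / h\<^sup>2"

definition sup_norm :: "nat \<Rightarrow> grid \<Rightarrow> real" where
  "sup_norm N \<nu> = Max {\<bar>\<nu> i j k\<bar> | i j k. i \<in> {1..int N} \<and> j \<in> {1..int N} \<and> k \<in> {1..int N}}"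

definition chem_pot :: "real \<Rightarrow> real \<Rightarrow> real \<Rightarrow> grid \<Rightarrow> grid \<Rightarrow> grid" where
  "chem_pot eps theta0 h \<phi>n \<phi>' i j k =
     ln (1 + \<phi>' i j k) - ln (1 - \<phi>' i j k) - theta0 * \<phi>n i j k - eps\<^sup>2 * lap_h h \<phi>' i j k"

definition scheme_step :: "real \<Rightarrow> real \<Rightarrow> real \<Rightarrow> real \<Rightarrow> grid \<Rightarrow> grid \<Rightarrow> bool" where
  "scheme_step eps theta0 dt h \<phi>n \<phi>' \<longleftrightarrow>
     (\<forall>i j k. (\<phi>' i j k - \<phi>n i j k) / dt = - chem_pot eps theta0 h \<phi>n \<phi>' i j k)"

end

theory Submission
  imports Defs
begin

lemma per_shift_i:
  assumes "per N v" shows "v (i + m * int N) j k = v i j k"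
proof (induction m rule: int_induct[where k=0])
  case base then show ?case by simp
next
  case (step1 m)
  have "v (i + (m+1) * int N) j k = v ((i + m * int N) + int N) j k" by (simp add: algebra_simps)
  also have "... = v (i + m * int N) j k" using assms unfolding per_def by blast
  finally show ?case using step1 by simp
next
  case (step2 m)
  have "v (i + m * int N) j k = v ((i + (m - 1) * int N) + int N) j k" by (simp add: algebra_simps)
  also have "... = v (i + (m-1) * int N) j k" using assms unfolding per_def by blast
  finally show ?case using step2 by simp
qed

lemma per_shift_j:
  assumes "per N v" shows "v i (j + m * int N) k = v i j k"
proof (induction m rule: int_induct[where k=0])
  case base then show ?case by simp
next
  case (step1 m)
  have "v i (j + (m+1) * int N) k = v i ((j + m * int N) + int N) k" by (simp add: algebra_simps)
  also have "... = v i (j + m * int N) k" using assms unfolding per_def by blast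
  finally show ?case using step1 by simp
next
  case (step2 m)
  have "v i (j + m * int N) k = v i ((j + (m - 1) * int N) + int N) k" by (simp add: algebra_simps)
  also have "... = v i (j + (m-1) * int N) k" using assms unfolding per_def by blast
  finally show ?case using step2 by simp
qed

lemma per_shift_k:
  assumes "per N v" shows "v i j (k + m * int N) = v i j k"
proof (induction m rule: int_induct[where k=0])
  case base then show ?case by simp
next
  case (step1 m)
  have "v i j (k + (m+1) * int N) = v i j ((k + m * int N) + int N)" by (simp add: algebra_simps)
  also have "... = v i j (k + m * int N)" using assms unfolding per_def by blast
  finally show ?case using step1 by simp
next
  case (step2 m)
  have "v i j (k + m * int N) = v i j ((k + (m - 1) * int N) + int N)" by (simp add: algebra_simps)
  also have "... = v i j (k + (m-1) * int N)" using assms unfolding per_def by blast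
  finally show ?case using step2 by simp
qed

definition rep :: "nat \<Rightarrow> int \<Rightarrow> int" where "rep N i = (i - 1) mod int N + 1"

lemma rep_in: "N > 0 \<Longrightarrow> rep N i \<in> {1..int N}"
  unfolding rep_def by (auto simp: pos_mod_bound) (smt (verit) of_nat_0_less_iff pos_mod_bound)

lemma rep_decomp: "i = rep N i + ((i - 1) div int N) * int N"
  unfolding rep_def by (metis add.commute diff_add_cancel minus_div_mult_eq_mod add.assoc)

lemma per_rep:
  assumes "per N v" shows "v i j k = v (rep N i) (rep N j) (rep N k)"
proof -
  have "v i j k = v (rep N i + ((i - 1) div int N) * int N) j k" using rep_decomp[of i N] by simp
  also have "... = v (rep N i) j k" by (rule per_shift_i[OF assms])
  also have "... = v (rep N i) (rep N j + ((j - 1) div int N) * int N) k" using rep_decomp[of j N] by simp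
  also have "... = v (rep N i) (rep N j) k" by (rule per_shift_j[OF assms])
  also have "... = v (rep N i) (rep N j) (rep N k + ((k - 1) div int N) * int N)" using rep_decomp[of k N] by simp
  also have "... = v (rep N i) (rep N j) (rep N k)" by (rule per_shift_k[OF assms])
  finally show ?thesis .
qed

definition box :: "nat \<Rightarrow> (int \<times> int \<times> int) set" where
  "box N = {1..int N} \<times> {1..int N} \<times> {1..int N}"

lemma box_fin: "finite (box N)" unfolding box_def by simp
lemma box_ne: "N > 0 \<Longrightarrow> box N \<noteq> {}" unfolding box_def by auto

lemma sup_norm_img: "sup_norm N v = Max ((\<lambda>(i,j,k). \<bar>v i j k\<bar>) ` box N)"
proof -
  have "{\<bar>v i j k\<bar> | i j k. i \<in> {1..int N} \<and> j \<in> {1..int N} \<and> k \<in> {1..int N}}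
      = (\<lambda>(i,j,k). \<bar>v i j k\<bar>) ` box N" (is "?A = ?B")
  proof (intro equalityI subsetI)
    fix x assume "x \<in> ?A"
    then obtain i j k where h: "x = \<bar>v i j k\<bar>" "i \<in> {1..int N}" "j \<in> {1..int N}" "k \<in> {1..int N}" by blast
    show "x \<in> ?B" by (rule rev_image_eqI[of "(i,j,k)"]) (use h in \<open>auto simp: box_def\<close>)
  next
    fix x assume "x \<in> ?B"
    then obtain i j k where h: "(i,j,k) \<in> box N" "x = \<bar>v i j k\<bar>" by auto
    then show "x \<in> ?A" unfolding box_def by blast
  qed
  then show ?thesis unfolding sup_norm_def by simp
qed

lemma sup_ge:
  assumes "per N v" "N > 0" shows "\<bar>v i j k\<bar> \<le> sup_norm N v"
proof -
  have "(rep N i, rep N j, rep N k) \<in> box N" using rep_in[OF assms(2)] unfolding box_def by auto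
  hence "\<bar>v (rep N i) (rep N j) (rep N k)\<bar> \<le> sup_norm N v"
    unfolding sup_norm_img by (intro Max_ge finite_imageI box_fin rev_image_eqI) auto
  thus ?thesis using per_rep[OF assms(1)] by simp
qed

lemma sup_lt:
  assumes "N > 0" "\<And>i j k. \<bar>v i j k\<bar> < B" shows "sup_norm N v < B"
  unfolding sup_norm_img using assms box_fin box_ne
  by (subst Max_less_iff) auto

lemma sup_le:
  assumes "N > 0" "\<And>i j k. \<bar>v i j k\<bar> \<le> B" shows "sup_norm N v \<le> B"
  unfolding sup_norm_img using assms box_fin box_ne
  by (subst Max_le_iff) auto

lemma max_pt:
  assumes "per N v" "N > 0" shows "\<exists>i j k. \<forall>a b c. v a b c \<le> v i j k"
proof -
  let ?f = "\<lambda>(i,j,k). v i j k"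
  have "Max (?f ` box N) \<in> ?f ` box N" using box_fin box_ne[OF assms(2)] by (intro Max_in) auto
  then obtain i j k where ijk: "(i,j,k) \<in> box N" "Max (?f ` box N) = v i j k" by auto
  have "v a b c \<le> v i j k" for a b c
  proof -
    have "(rep N a, rep N b, rep N c) \<in> box N" using rep_in[OF assms(2)] unfolding box_def by auto
    hence "v (rep N a) (rep N b) (rep N c) \<le> Max (?f ` box N)"
      by (intro Max_ge finite_imageI box_fin rev_image_eqI) auto
    thus ?thesis using per_rep[OF assms(1)] ijk by simp
  qed
  thus ?thesis by blast
qed

definition gf :: "real \<Rightarrow> real" where "gf x = ln (1 + x) - ln (1 - x)"

lemma gf_odd: "gf (-x) = - gf x" unfolding gf_def by simp

lemma gf_mono: assumes "-1 < x" "x < y" "y < 1" shows "gf x < gf y"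
proof -
  have "ln (1+x) < ln (1+y)" using assms by simp
  moreover have "ln (1-y) < ln (1-x)" using assms by simp
  ultimately show ?thesis unfolding gf_def by simp
qed

lemma gf_mono_le: assumes "-1 < x" "x \<le> y" "y < 1" shows "gf x \<le> gf y"
  using gf_mono[of x y] assms by (cases "x = y") auto

lemma gf_big: assumes "t0 > 0" "1 - exp (-t0)/2 \<le> x" "x < 1" shows "t0 \<le> gf x"
proof -
  have e: "exp (-t0) < 1" using assms by simp
  have x0: "x \<ge> 0" using e assms by linarith
  have "ln (1+x) \<ge> 0" using x0 by simp
  moreover have "ln (1-x) \<le> ln (exp (-t0)/2)" using assms by (subst ln_le_cancel_iff) auto
  moreover have "ln (exp (-t0)/2) = -t0 - ln 2" by (simp add: ln_div)
  moreover have "ln (2::real) \<ge> 0" by simp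
  ultimately show ?thesis unfolding gf_def by linarith
qed

definition FF :: "real \<Rightarrow> real \<Rightarrow> real \<Rightarrow> real" where "FF K dt x = K * x + dt * gf x"

lemma FF_lip:
  assumes "K > 0" "dt > 0" "-1 < x" "x < 1" "-1 < y" "y < 1"
  shows "K * \<bar>x - y\<bar> \<le> \<bar>FF K dt x - FF K dt y\<bar>"
proof (cases "y \<le> x")
  case True
  have "gf y \<le> gf x" using gf_mono_le assms True by auto
  hence "dt * gf y \<le> dt * gf x" using assms by simp
  moreover have "K * (x - y) \<ge> 0" using True assms by simp
  moreover have "FF K dt x - FF K dt y = K * (x - y) + (dt * gf x - dt * gf y)" unfolding FF_def by (simp add: algebra_simps)
  ultimately show ?thesis using True by (simp add: abs_if)
next
  case False
  have "gf x \<le> gf y" using gf_mono_le assms False by auto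
  hence "dt * gf x \<le> dt * gf y" using assms by simp
  moreover have "K * (y - x) \<ge> 0" using False assms by simp
  moreover have "FF K dt y - FF K dt x = K * (y - x) + (dt * gf y - dt * gf x)" unfolding FF_def by (simp add: algebra_simps)
  ultimately show ?thesis using False by (simp add: abs_if)
qed

lemma FF_ex:
  assumes "K > 0" "dt > 0" shows "\<exists>x. -1 < x \<and> x < 1 \<and> FF K dt x = r"
proof -
  define t where "t = (\<bar>r\<bar> + K) / dt"
  have t0: "t > 0" using assms unfolding t_def by simp
  define b where "b = (exp t - 1) / (exp t + 1)"
  have et: "exp t > 1" using t0 by simp
  have ep: "exp t + 1 > 0" using et by linarith
  have b0: "b \<ge> 0" "b < 1" using et ep unfolding b_def by (auto simp: divide_simps)
  have 1: "1 + b = 2 * exp t / (exp t + 1)"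
  proof -
    have "\<And>E::real. E + 1 > 0 \<Longrightarrow> 1 + (E - 1) / (E + 1) = 2 * E / (E + 1)" by (simp add: field_simps)
    from this[OF ep] show ?thesis unfolding b_def .
  qed
  have 2: "1 - b = 2 / (exp t + 1)"
  proof -
    have "\<And>E::real. E + 1 > 0 \<Longrightarrow> 1 - (E - 1) / (E + 1) = 2 / (E + 1)" by (simp add: field_simps)
    from this[OF ep] show ?thesis unfolding b_def .
  qed
  have gb: "gf b = t"
  proof -
    have "gf b = ln (2 * exp t / (exp t + 1)) - ln (2 / (exp t + 1))" unfolding gf_def 1 2 ..
    also have "... = ln ((2 * exp t / (exp t + 1)) / (2 / (exp t + 1)))"
      using et by (subst ln_div) auto
    also have "(2 * exp t / (exp t + 1)) / (2 / (exp t + 1)) = exp t"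
    proof -
      have "\<And>E::real. E + 1 > 0 \<Longrightarrow> (2 * E / (E + 1)) / (2 / (E + 1)) = E" by (simp add: field_simps)
      from this[OF ep] show ?thesis .
    qed
    finally show ?thesis by simp
  qed
  have dtt: "dt * t = \<bar>r\<bar> + K" using assms unfolding t_def by simp
  have Kb: "K * b \<ge> 0" using b0 assms by simp
  have ra: "r \<le> \<bar>r\<bar>" "- \<bar>r\<bar> \<le> r" by auto
  have Fb: "r \<le> FF K dt b" unfolding FF_def gb dtt using Kb ra assms by linarith
  have Fmb: "FF K dt (-b) \<le> r" unfolding FF_def gf_odd gb using dtt Kb ra assms by simp
  have cont: "continuous_on {-b..b} (FF K dt)"
    unfolding FF_def gf_def using b0 by (intro continuous_intros) auto
  from IVT'[of "FF K dt" "-b" r b, OF Fmb Fb _ cont] b0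
  obtain x where "-b \<le> x" "x \<le> b" "FF K dt x = r" by auto
  thus ?thesis using b0 by (intro exI[of _ x]) auto
qed

definition SS :: "real \<Rightarrow> real \<Rightarrow> real \<Rightarrow> real" where
  "SS K dt r = (THE x. -1 < x \<and> x < 1 \<and> FF K dt x = r)"

lemma SS_prop:
  assumes "K > 0" "dt > 0"
  shows "-1 < SS K dt r \<and> SS K dt r < 1 \<and> FF K dt (SS K dt r) = r"
proof -
  have "\<exists>!x. -1 < x \<and> x < 1 \<and> FF K dt x = r"
  proof (rule ex_ex1I)
    show "\<exists>x. -1 < x \<and> x < 1 \<and> FF K dt x = r" by (rule FF_ex[OF assms])
  next
    fix x y assume "-1 < x \<and> x < 1 \<and> FF K dt x = r" "-1 < y \<and> y < 1 \<and> FF K dt y = r"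
    with FF_lip[OF assms, of x y] have "K * \<bar>x - y\<bar> \<le> 0" by simp
    moreover have "K * \<bar>x - y\<bar> \<ge> 0" using assms by simp
    ultimately have "K * \<bar>x - y\<bar> = 0" by linarith
    thus "x = y" using assms by simp
  qed
  thus ?thesis unfolding SS_def by (rule theI')
qed

lemma SS_lip:
  assumes "K > 0" "dt > 0"
  shows "K * \<bar>SS K dt r1 - SS K dt r2\<bar> \<le> \<bar>r1 - r2\<bar>"
  using FF_lip[OF assms, of "SS K dt r1" "SS K dt r2"] SS_prop[OF assms, of r1] SS_prop[OF assms, of r2]
  by simp

definition nb :: "grid \<Rightarrow> grid" where
  "nb v i j k = v (i+1) j k + v (i-1) j k + v i (j+1) k + v i (j-1) k + v i j (k+1) + v i j (k-1)"

lemma lap_nb: "lap_h h v i j k = (nb v i j k - 6 * v i j k) / h\<^sup>2"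
  unfolding lap_h_def nb_def by simp

lemma rel_iff:
  fixes v p G th E L dt :: real
  assumes "dt \<noteq> 0"
  shows "((v - p) / dt = - (G - th * p - E * L)) \<longleftrightarrow> (v + dt * G = (1 + dt * th) * p + dt * E * L)"
proof -
  have "((v - p) / dt = - (G - th * p - E * L)) \<longleftrightarrow> v - p = - (G - th * p - E * L) * dt"
    by (rule nonzero_divide_eq_eq[OF assms])
  also have "... \<longleftrightarrow> (v + dt * G = (1 + dt * th) * p + dt * E * L)" by (simp add: algebra_simps)
  finally show ?thesis .
qed

lemma scheme_iff:
  assumes "dt > 0"
  shows "scheme_step eps th dt h pn v \<longleftrightarrow>
    (\<forall>i j k. v i j k + dt * gf (v i j k) = (1 + dt * th) * pn i j k + (dt * (eps\<^sup>2 / h\<^sup>2)) * (nb v i j k - 6 * v i j k))"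
proof -
  have "(v i j k - pn i j k) / dt = - chem_pot eps th h pn v i j k \<longleftrightarrow>
     v i j k + dt * gf (v i j k) = (1 + dt * th) * pn i j k + (dt * (eps\<^sup>2 / h\<^sup>2)) * (nb v i j k - 6 * v i j k)" for i j k
  proof -
    have "chem_pot eps th h pn v i j k = gf (v i j k) - th * pn i j k - (eps\<^sup>2 / h\<^sup>2) * (nb v i j k - 6 * v i j k)"
      unfolding chem_pot_def gf_def lap_nb by simp
    thus ?thesis using rel_iff[of dt "v i j k" "pn i j k" "gf (v i j k)" th "eps\<^sup>2 / h\<^sup>2" "nb v i j k - 6 * v i j k"] assms
      by simp
  qed
  thus ?thesis unfolding scheme_step_def by blast
qed

lemma nb_per: assumes "per N v" shows "per N (nb v)"
proof -
  have h1: "\<And>i j k. v (i + int N) j k = v i j k"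
   and h2: "\<And>i j k. v i (j + int N) k = v i j k"
   and h3: "\<And>i j k. v i j (k + int N) = v i j k" using assms unfolding per_def by auto
  have a: "v (i + int N + 1) j k = v (i+1) j k" for i j k
  proof - have e: "i + int N + 1 = (i+1) + int N" by simp show ?thesis unfolding e by (rule h1) qed
  have b: "v (i + int N - 1) j k = v (i-1) j k" for i j k
  proof - have e: "i + int N - 1 = (i-1) + int N" by simp show ?thesis unfolding e by (rule h1) qed
  have c: "v i (j + int N + 1) k = v i (j+1) k" for i j k
  proof - have e: "j + int N + 1 = (j+1) + int N" by simp show ?thesis unfolding e by (rule h2) qed
  have d: "v i (j + int N - 1) k = v i (j-1) k" for i j k
  proof - have e: "j + int N - 1 = (j-1) + int N" by simp show ?thesis unfolding e by (rule h2) qed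
  have e: "v i j (k + int N + 1) = v i j (k+1)" for i j k
  proof - have e: "k + int N + 1 = (k+1) + int N" by simp show ?thesis unfolding e by (rule h3) qed
  have f: "v i j (k + int N - 1) = v i j (k-1)" for i j k
  proof - have e: "k + int N - 1 = (k-1) + int N" by simp show ?thesis unfolding e by (rule h3) qed
  show ?thesis unfolding per_def nb_def by (simp add: a b c d e f h1 h2 h3)
qed

definition TT :: "real \<Rightarrow> real \<Rightarrow> real \<Rightarrow> grid \<Rightarrow> grid \<Rightarrow> grid" where
  "TT K dt c bb v i j k = SS K dt (bb i j k + c * nb v i j k)"

lemma TT_per: assumes "per N bb" "per N v" shows "per N (TT K dt c bb v)"
  using assms nb_per[OF assms(2)] unfolding per_def TT_def by simp

lemma nb_diff: "nb v i j k - nb w i j k = nb (\<lambda>a b c. v a b c - w a b c) i j k"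
  unfolding nb_def by simp

lemma nb_bound: assumes "\<And>a b c. \<bar>u a b c\<bar> \<le> B" shows "\<bar>nb u i j k\<bar> \<le> 6 * B"
proof -
  have "\<bar>nb u i j k\<bar> \<le> \<bar>u (i+1) j k\<bar> + \<bar>u (i-1) j k\<bar> + \<bar>u i (j+1) k\<bar> + \<bar>u i (j-1) k\<bar> + \<bar>u i j (k+1)\<bar> + \<bar>u i j (k-1)\<bar>"
    unfolding nb_def by linarith
  also have "... \<le> 6 * B" using assms[of "i+1" j k] assms[of "i-1" j k] assms[of i "j+1" k]
    assms[of i "j-1" k] assms[of i j "k+1"] assms[of i j "k-1"] by linarith
  finally show ?thesis .
qed

lemma TT_lip:
  assumes "K > 0" "dt > 0" "c \<ge> 0" "\<And>a b c. \<bar>v a b c - w a b c\<bar> \<le> B"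
  shows "K * \<bar>TT K dt c bb v i j k - TT K dt c bb w i j k\<bar> \<le> c * (6 * B)"
proof -
  have "K * \<bar>TT K dt c bb v i j k - TT K dt c bb w i j k\<bar> \<le> \<bar>(bb i j k + c * nb v i j k) - (bb i j k + c * nb w i j k)\<bar>"
    unfolding TT_def by (rule SS_lip[OF assms(1,2)])
  also have "... = \<bar>c * nb v i j k - c * nb w i j k\<bar>" by simp
  also have "... = c * \<bar>nb (\<lambda>a b c. v a b c - w a b c) i j k\<bar>"
    using assms(3) by (simp add: nb_diff[symmetric] right_diff_distrib[symmetric] abs_mult)
  also have "... \<le> c * (6 * B)" using nb_bound[of "\<lambda>a b c. v a b c - w a b c" B] assms(3,4)
    by (intro mult_left_mono) auto
  finally show ?thesis .
qed

lemma conv_geo: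
  fixes x :: "nat \<Rightarrow> real"
  assumes "\<And>n. \<bar>x (Suc (Suc n)) - x (Suc n)\<bar> \<le> C * q ^ n" "0 \<le> q" "q < 1"
  shows "convergent x"
proof -
  define y where "y n = x (Suc n)" for n
  define d where "d n = y (Suc n) - y n" for n
  have "summable (\<lambda>n. C * q ^ n)" using assms by (intro summable_mult summable_geometric) auto
  hence sd: "summable d"
    by (rule summable_comparison_test'[where N=0]) (use assms in \<open>simp add: d_def y_def\<close>)
  have ye: "y = (\<lambda>n. y 0 + (\<Sum>k<n. d k))" unfolding d_def by (rule ext) (simp add: sum_lessThan_telescope)
  have "(\<lambda>n. y 0 + (\<Sum>k<n. d k)) \<longlonglongrightarrow> y 0 + suminf d"
    by (intro tendsto_add tendsto_const summable_LIMSEQ sd)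
  hence "y \<longlonglongrightarrow> y 0 + suminf d" using ye by simp
  hence "x \<longlonglongrightarrow> y 0 + suminf d" unfolding y_def by (rule LIMSEQ_imp_Suc)
  thus ?thesis by (auto simp: convergent_def)
qed

lemma exist_sol:
  fixes c dt :: real
  assumes K: "K = 1 + 6 * c" and c0: "c \<ge> 0" and dt: "dt > 0" and pb: "per N bb"
  shows "\<exists>v. per N v \<and> (\<forall>i j k. -1 < v i j k \<and> v i j k < 1 \<and> FF K dt (v i j k) = bb i j k + c * nb v i j k)"
proof -
  have K0: "K > 0" using K c0 by simp
  define T where "T = TT K dt c bb"
  define it where "it n = (T ^^ n) (\<lambda>_ _ _. 0)" for n
  have itS: "it (Suc n) = T (it n)" for n unfolding it_def by simp
  have itper: "per N (it n)" for n
  proof (induction n)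
    case 0 show ?case unfolding it_def per_def by simp
  next
    case (Suc n) thus ?case unfolding itS T_def by (rule TT_per[OF pb])
  qed
  have itbd: "-1 < it (Suc n) i j k \<and> it (Suc n) i j k < 1" for n i j k
    unfolding itS T_def TT_def using SS_prop[OF K0 dt] by blast
  define q where "q = 6 * c / K"
  have q0: "0 \<le> q" "q < 1" unfolding q_def using K c0 by (auto simp: divide_simps)
  have diff: "\<bar>it (Suc (Suc n)) i j k - it (Suc n) i j k\<bar> \<le> 2 * q ^ n" for n i j k
  proof (induction n arbitrary: i j k)
    case 0
    show ?case using itbd[of 1 i j k] itbd[of 0 i j k] by (simp add: abs_le_iff; linarith)
  next
    case (Suc n)
    have "K * \<bar>T (it (Suc (Suc n))) i j k - T (it (Suc n)) i j k\<bar> \<le> c * (6 * (2 * q ^ n))"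
      unfolding T_def by (rule TT_lip[OF K0 dt c0 Suc.IH])
    hence "K * \<bar>it (Suc (Suc (Suc n))) i j k - it (Suc (Suc n)) i j k\<bar> \<le> c * (6 * (2 * q ^ n))"
      by (simp only: itS)
    hence "\<bar>it (Suc (Suc (Suc n))) i j k - it (Suc (Suc n)) i j k\<bar> \<le> c * (6 * (2 * q ^ n)) / K"
      using K0 by (simp add: pos_le_divide_eq mult.commute)
    also have "c * (6 * (2 * q ^ n)) / K = 2 * q ^ Suc n" unfolding q_def using K0 by simp
    finally show ?case .
  qed
  have conv: "convergent (\<lambda>n. it n i j k)" for i j k
    by (rule conv_geo[OF _ q0, where C=2]) (rule diff)
  define v where "v i j k = lim (\<lambda>n. it n i j k)" for i j k
  have lim: "(\<lambda>n. it n i j k) \<longlonglongrightarrow> v i j k" for i j k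
    using conv[of i j k] unfolding v_def convergent_LIMSEQ_iff .
  have vper: "per N v"
    using itper unfolding per_def v_def by simp
  have nblim: "(\<lambda>n. nb (it n) i j k) \<longlonglongrightarrow> nb v i j k" for i j k
    unfolding nb_def by (intro tendsto_add lim)
  have fixpt: "v i j k = T v i j k" for i j k
  proof -
    have bnd: "\<bar>T (it n) i j k - T v i j k\<bar> \<le> c * \<bar>nb (it n) i j k - nb v i j k\<bar> / K" for n
    proof -
      have "K * \<bar>T (it n) i j k - T v i j k\<bar> \<le> \<bar>(bb i j k + c * nb (it n) i j k) - (bb i j k + c * nb v i j k)\<bar>"
        unfolding T_def TT_def by (rule SS_lip[OF K0 dt])
      also have "... = c * \<bar>nb (it n) i j k - nb v i j k\<bar>" using c0
        by (simp add: right_diff_distrib[symmetric] abs_mult)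
      finally show ?thesis using K0 by (simp add: pos_le_divide_eq mult.commute)
    qed
    have g0: "(\<lambda>n. c * \<bar>nb (it n) i j k - nb v i j k\<bar> / K) \<longlonglongrightarrow> c * \<bar>nb v i j k - nb v i j k\<bar> / K"
      using K0 by (intro tendsto_intros nblim) auto
    hence g0': "(\<lambda>n. c * \<bar>nb (it n) i j k - nb v i j k\<bar> / K) \<longlonglongrightarrow> 0" by simp
    have m0: "(\<lambda>n. - (c * \<bar>nb (it n) i j k - nb v i j k\<bar> / K)) \<longlonglongrightarrow> 0"
      using tendsto_minus[OF g0'] by simp
    have "(\<lambda>n. T (it n) i j k - T v i j k) \<longlonglongrightarrow> 0"
    proof (rule tendsto_sandwich[OF always_eventually always_eventually m0 g0'])
      show "\<forall>n. - (c * \<bar>nb (it n) i j k - nb v i j k\<bar> / K) \<le> T (it n) i j k - T v i j k"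
        using bnd by (metis abs_le_iff minus_le_iff)
      show "\<forall>n. T (it n) i j k - T v i j k \<le> c * \<bar>nb (it n) i j k - nb v i j k\<bar> / K"
        using bnd by (metis abs_le_iff)
    qed
    hence "(\<lambda>n. T (it n) i j k) \<longlonglongrightarrow> T v i j k" by (rule LIM_zero_cancel)
    hence "(\<lambda>n. it (Suc n) i j k) \<longlonglongrightarrow> T v i j k" unfolding itS .
    moreover have "(\<lambda>n. it (Suc n) i j k) \<longlonglongrightarrow> v i j k" using LIMSEQ_Suc[OF lim] .
    ultimately show ?thesis using LIMSEQ_unique by blast
  qed
  have "-1 < v i j k \<and> v i j k < 1 \<and> FF K dt (v i j k) = bb i j k + c * nb v i j k" for i j k
    using SS_prop[OF K0 dt, of "bb i j k + c * nb v i j k"] fixpt[of i j k] unfolding T_def TT_def by simp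
  thus ?thesis using vper by blast
qed

lemma nb_le_max: assumes "\<And>a b c. v a b c \<le> v i j k" shows "nb v i j k \<le> 6 * v i j k"
  unfolding nb_def using assms[of "i+1" j k] assms[of "i-1" j k] assms[of i "j+1" k]
    assms[of i "j-1" k] assms[of i j "k+1"] assms[of i j "k-1"] by linarith

lemma nb_ge_min: assumes "\<And>a b c. v i j k \<le> v a b c" shows "6 * v i j k \<le> nb v i j k"
  unfolding nb_def using assms[of "i+1" j k] assms[of "i-1" j k] assms[of i "j+1" k]
    assms[of i "j-1" k] assms[of i j "k+1"] assms[of i j "k-1"] by linarith

lemma min_pt:
  assumes "per N v" "N > 0" shows "\<exists>i j k. \<forall>a b c. v i j k \<le> v a b c"
proof -
  have "per N (\<lambda>a b c. - v a b c)" using assms(1) unfolding per_def by simp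
  from max_pt[OF this assms(2)] obtain i j k where "\<forall>a b c. - v a b c \<le> - v i j k" by blast
  thus ?thesis by auto
qed

lemma uniq_le:
  fixes dt c :: real
  assumes dt: "dt > 0" and c0: "c \<ge> 0" and N: "N > 0" and p1: "per N v1" and p2: "per N v2"
    and b1: "\<And>i j k. \<bar>v1 i j k\<bar> < 1" and b2: "\<And>i j k. \<bar>v2 i j k\<bar> < 1"
    and r1: "\<And>i j k. v1 i j k + dt * gf (v1 i j k) = (1 + dt * th) * pn i j k + c * (nb v1 i j k - 6 * v1 i j k)"
    and r2: "\<And>i j k. v2 i j k + dt * gf (v2 i j k) = (1 + dt * th) * pn i j k + c * (nb v2 i j k - 6 * v2 i j k)"
  shows "v1 i j k \<le> v2 i j k"
proof -
  define w where "w a b c = v1 a b c - v2 a b c" for a b c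
  have pw: "per N w" using p1 p2 unfolding per_def w_def by simp
  obtain x y z where m: "\<forall>a b c. w a b c \<le> w x y z" using max_pt[OF pw N] by blast
  have "w x y z \<le> 0"
  proof (rule ccontr)
    assume "\<not> w x y z \<le> 0"
    hence pos: "v2 x y z < v1 x y z" unfolding w_def by simp
    have "gf (v2 x y z) < gf (v1 x y z)" using gf_mono[OF _ pos] b1[of x y z] b2[of x y z] by (simp add: abs_less_iff)
    hence g: "dt * (gf (v1 x y z) - gf (v2 x y z)) > 0" using dt by simp
    have "nb w x y z \<le> 6 * w x y z" using m by (intro nb_le_max) blast
    hence c: "c * (nb w x y z - 6 * w x y z) \<le> 0" using c0 by (intro mult_nonneg_nonpos) auto
    have eq: "c * (nb v1 x y z - 6 * v1 x y z) - c * (nb v2 x y z - 6 * v2 x y z) = c * (nb w x y z - 6 * w x y z)"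
      unfolding w_def nb_def by (simp add: algebra_simps)
    have "w x y z + dt * (gf (v1 x y z) - gf (v2 x y z)) = c * (nb w x y z - 6 * w x y z)"
      using r1[of x y z] r2[of x y z] eq unfolding w_def by (simp add: algebra_simps)
    thus False using g c pos unfolding w_def by linarith
  qed
  hence "w i j k \<le> 0" using m by (meson order_trans)
  thus ?thesis unfolding w_def by simp
qed

lemma step_bd:
  fixes dt c th a d :: real
  assumes dt: "dt > 0" and c0: "c \<ge> 0" and th: "th > 0" and N: "N > 0" and pv: "per N v"
    and bv: "\<And>i j k. \<bar>v i j k\<bar> < 1"
    and r: "\<And>i j k. v i j k + dt * gf (v i j k) = (1 + dt * th) * pn i j k + c * (nb v i j k - 6 * v i j k)"
    and pa: "\<And>i j k. \<bar>pn i j k\<bar> \<le> a" and ad: "a \<le> 1 - d"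
    and hg: "\<And>x. 1 - d < x \<Longrightarrow> x < 1 \<Longrightarrow> th \<le> gf x"
  shows "\<bar>v i j k\<bar> \<le> 1 - d"
proof -
  have dth: "dt * th > 0" using dt th by simp
  obtain x y z where m: "\<forall>a b c. v a b c \<le> v x y z" using max_pt[OF pv N] by blast
  have up: "v x y z \<le> 1 - d"
  proof (rule ccontr)
    assume "\<not> v x y z \<le> 1 - d"
    hence gt: "1 - d < v x y z" by simp
    have lt: "v x y z < 1" using bv[of x y z] by (simp add: abs_less_iff)
    have "th \<le> gf (v x y z)" using hg[OF gt lt] .
    hence "dt * th \<le> dt * gf (v x y z)" using dt by simp
    moreover have "dt * th * v x y z \<le> dt * th" using mult_left_mono[of "v x y z" 1 "dt * th"] lt dth by simp
    ultimately have l: "(1 + dt * th) * v x y z \<le> v x y z + dt * gf (v x y z)" by (simp add: algebra_simps)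
    have "nb v x y z \<le> 6 * v x y z" using m by (intro nb_le_max) blast
    hence c: "c * (nb v x y z - 6 * v x y z) \<le> 0" using c0 by (intro mult_nonneg_nonpos) auto
    have "(1 + dt * th) * pn x y z \<le> (1 + dt * th) * a" using pa[of x y z] dth by (intro mult_left_mono) (auto simp: abs_le_iff)
    hence "(1 + dt * th) * v x y z \<le> (1 + dt * th) * a" using l c r[of x y z] by linarith
    hence "v x y z \<le> a" using dth by simp
    thus False using gt ad by linarith
  qed
  obtain x' y' z' where m': "\<forall>a b c. v x' y' z' \<le> v a b c" using min_pt[OF pv N] by blast
  have lo: "-(1 - d) \<le> v x' y' z'"
  proof (rule ccontr)
    assume "\<not> -(1 - d) \<le> v x' y' z'"
    hence gt: "1 - d < - v x' y' z'" by simp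
    have lt: "- v x' y' z' < 1" using bv[of x' y' z'] by (simp add: abs_less_iff)
    have "th \<le> gf (- v x' y' z')" using hg[OF gt lt] .
    hence "gf (v x' y' z') \<le> - th" unfolding gf_odd by simp
    hence "dt * gf (v x' y' z') \<le> dt * (- th)" using dt by (intro mult_left_mono) auto
    hence "dt * gf (v x' y' z') \<le> - (dt * th)" by simp
    moreover have "- (dt * th) \<le> dt * th * v x' y' z'" using mult_left_mono[of "-1" "v x' y' z'" "dt * th"] lt dth by simp
    ultimately have l: "v x' y' z' + dt * gf (v x' y' z') \<le> (1 + dt * th) * v x' y' z'" by (simp add: algebra_simps)
    have "6 * v x' y' z' \<le> nb v x' y' z'" using m' by (intro nb_ge_min) blast
    hence c: "0 \<le> c * (nb v x' y' z' - 6 * v x' y' z')" using c0 by simp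
    have "(1 + dt * th) * (- a) \<le> (1 + dt * th) * pn x' y' z'" using pa[of x' y' z'] dth by (intro mult_left_mono) (auto simp: abs_le_iff)
    hence "(1 + dt * th) * (- a) \<le> (1 + dt * th) * v x' y' z'" using l c r[of x' y' z'] by linarith
    moreover have "1 + dt * th > 0" using dth by simp
    ultimately have "- a \<le> v x' y' z'" using mult_le_cancel_left_pos by blast
    thus False using gt ad by linarith
  qed
  have "v i j k \<le> 1 - d" using m up by (meson order_trans)
  moreover have "-(1 - d) \<le> v i j k" using m' lo by (meson order_trans)
  ultimately show ?thesis by (simp add: abs_le_iff)
qed

lemma per_all: assumes "per N (\<phi> 0)" "\<And>n. per N (\<phi> (Suc n))" shows "per N (\<phi> n)"
  using assms by (cases n) auto

theorem theorem2p2: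
  fixes theta0 dt L :: real and N :: nat
  assumes "theta0 > 0" and "dt > 0" and "L > 0" and "N > 0"
  shows "(\<forall>eps M :: real. \<forall>\<phi>n. eps > 0 \<and> M > 0 \<and> per N \<phi>n \<and> sup_norm N \<phi>n \<le> M \<longrightarrow>
            (\<exists>!\<phi>'. per N \<phi>' \<and> sup_norm N \<phi>' < 1 \<and> scheme_step eps theta0 dt (L / real N) \<phi>n \<phi>'))
       \<and> (\<forall>delta0 :: real. 0 < delta0 \<and> delta0 < 1 \<longrightarrow>
            (\<exists>dstar :: real. 0 < dstar \<and> dstar < 1 \<and>
              (\<forall>eps :: real. \<forall>\<phi> :: nat \<Rightarrow> grid.
                 eps > 0 \<and> per N (\<phi> 0) \<and> sup_norm N (\<phi> 0) \<le> 1 - delta0 \<and>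
                 (\<forall>n. per N (\<phi> (Suc n)) \<and> sup_norm N (\<phi> (Suc n)) < 1 \<and>
                       scheme_step eps theta0 dt (L / real N) (\<phi> n) (\<phi> (Suc n)))
                 \<longrightarrow> (\<forall>n. sup_norm N (\<phi> n) \<le> 1 - dstar))))"
proof (intro conjI allI impI)
  fix eps M :: real and \<phi>n :: grid
  assume hyp: "eps > 0 \<and> M > 0 \<and> per N \<phi>n \<and> sup_norm N \<phi>n \<le> M"
  define h where "h = L / real N"
  define c where "c = dt * (eps\<^sup>2 / h\<^sup>2)"
  have c0: "c \<ge> 0" unfolding c_def using assms by simp
  define bb where "bb i j k = (1 + dt * theta0) * \<phi>n i j k" for i j k
  have pb: "per N bb" using hyp unfolding per_def bb_def by simp
  obtain v where v: "per N v" "\<And>i j k. -1 < v i j k \<and> v i j k < 1 \<and>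
      FF (1 + 6 * c) dt (v i j k) = bb i j k + c * nb v i j k"
    using exist_sol[OF refl c0 assms(2) pb] by blast
  have rv: "v i j k + dt * gf (v i j k) = (1 + dt * theta0) * \<phi>n i j k + c * (nb v i j k - 6 * v i j k)" for i j k
  proof -
    have "(1 + 6 * c) * v i j k + dt * gf (v i j k) = bb i j k + c * nb v i j k"
      using v(2)[of i j k] unfolding FF_def by simp
    thus ?thesis unfolding bb_def by (simp add: algebra_simps)
  qed
  have sv: "scheme_step eps theta0 dt h \<phi>n v"
    unfolding scheme_iff[OF assms(2)] using rv unfolding c_def by blast
  have bv: "\<bar>v i j k\<bar> < 1" for i j k using v(2)[of i j k] by (simp add: abs_less_iff)
  have nv: "sup_norm N v < 1" by (rule sup_lt[OF assms(4) bv])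
  show "\<exists>!\<phi>'. per N \<phi>' \<and> sup_norm N \<phi>' < 1 \<and> scheme_step eps theta0 dt (L / real N) \<phi>n \<phi>'"
  proof (rule ex1I[of _ v])
    show "per N v \<and> sup_norm N v < 1 \<and> scheme_step eps theta0 dt (L / real N) \<phi>n v"
      using v(1) nv sv unfolding h_def by blast
  next
    fix w assume w: "per N w \<and> sup_norm N w < 1 \<and> scheme_step eps theta0 dt (L / real N) \<phi>n w"
    have bw: "\<bar>w i j k\<bar> < 1" for i j k using sup_ge[of N w i j k] w assms(4) by linarith
    have rw: "w i j k + dt * gf (w i j k) = (1 + dt * theta0) * \<phi>n i j k + c * (nb w i j k - 6 * w i j k)" for i j k
      using w unfolding scheme_iff[OF assms(2)] c_def h_def by blast
    show "w = v"
    proof (intro ext antisym)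
      fix i j k
      show "w i j k \<le> v i j k"
        by (rule uniq_le[OF assms(2) c0 assms(4), of w v]) (use w v(1) bw bv rw rv in auto)
      show "v i j k \<le> w i j k"
        by (rule uniq_le[OF assms(2) c0 assms(4), of v w]) (use w v(1) bw bv rw rv in auto)
    qed
  qed
next
  fix delta0 :: real assume d0: "0 < delta0 \<and> delta0 < 1"
  define d1 where "d1 = exp (- theta0) / 2"
  have e1: "exp (- theta0) < 1" using assms(1) by simp
  have d1: "0 < d1" "d1 < 1" unfolding d1_def using e1 by (simp, linarith)
  define ds where "ds = min delta0 d1"
  have ds: "0 < ds" "ds < 1" "ds \<le> delta0" "ds \<le> d1" unfolding ds_def using d0 d1 by auto
  have hg: "theta0 \<le> gf x" if "1 - ds < x" "x < 1" for x
    by (rule gf_big[OF assms(1)]) (use that ds(4) in \<open>auto simp: d1_def\<close>)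
  show "\<exists>dstar. 0 < dstar \<and> dstar < 1 \<and>
              (\<forall>eps \<phi>. eps > 0 \<and> per N (\<phi> 0) \<and> sup_norm N (\<phi> 0) \<le> 1 - delta0 \<and>
                 (\<forall>n. per N (\<phi> (Suc n)) \<and> sup_norm N (\<phi> (Suc n)) < 1 \<and>
                       scheme_step eps theta0 dt (L / real N) (\<phi> n) (\<phi> (Suc n)))
                 \<longrightarrow> (\<forall>n. sup_norm N (\<phi> n) \<le> 1 - dstar))"
  proof (intro exI[of _ ds] conjI ds(1,2) allI impI)
    fix eps :: real and \<phi> :: "nat \<Rightarrow> grid" and n :: nat
    assume H: "eps > 0 \<and> per N (\<phi> 0) \<and> sup_norm N (\<phi> 0) \<le> 1 - delta0 \<and>
                 (\<forall>n. per N (\<phi> (Suc n)) \<and> sup_norm N (\<phi> (Suc n)) < 1 \<and>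
                       scheme_step eps theta0 dt (L / real N) (\<phi> n) (\<phi> (Suc n)))"
    define c where "c = dt * (eps\<^sup>2 / (L / real N)\<^sup>2)"
    have c0: "c \<ge> 0" unfolding c_def using assms by simp
    have pp: "per N (\<phi> m)" for m using per_all[of N \<phi>] H by blast
    show "sup_norm N (\<phi> n) \<le> 1 - ds"
    proof (induction n)
      case 0 thus ?case using H ds by linarith
    next
      case (Suc n)
      have bv: "\<bar>\<phi> (Suc n) i j k\<bar> < 1" for i j k
      proof -
        have "sup_norm N (\<phi> (Suc n)) < 1" using H by blast
        thus ?thesis using sup_ge[OF pp assms(4), of "Suc n" i j k] by linarith
      qed
      have r: "\<phi> (Suc n) i j k + dt * gf (\<phi> (Suc n) i j k) = (1 + dt * theta0) * \<phi> n i j k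
          + c * (nb (\<phi> (Suc n)) i j k - 6 * \<phi> (Suc n) i j k)" for i j k
        using H unfolding scheme_iff[OF assms(2)] c_def by blast
      have pa: "\<bar>\<phi> n i j k\<bar> \<le> sup_norm N (\<phi> n)" for i j k by (rule sup_ge[OF pp assms(4)])
      have "\<bar>\<phi> (Suc n) i j k\<bar> \<le> 1 - ds" for i j k
        by (rule step_bd[OF assms(2) c0 assms(1) assms(4) pp bv r pa Suc hg])
      thus ?case by (rule sup_le[OF assms(4)])
    qed
  qed
qed

end
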